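(* Let $n \ge 1$ be such that $SP_n$ is tree-complete and $n+1$ is prime. Then $SP_{n+1}$ and $SP_{n+2}$ are tree-complete. Further, if $n+1$ and $n+3$ are both prime, then $SP_{n+1}, SP_{n+2}, SP_{n+3}, SP_{n+4}, SP_{n+5}$ are all tree-complete.
   Context: For $n \ge 1$, the super prime graph $SP_n$ is the graph with node set $\{1,2,\dots,n\}$ in which two distinct nodes $u, v$ are adjacent if and only if $\gcd(u,v) = 1$. A graph $G$ of order $n$ is tree-complete if every tree of order $n$ is isomorphic to a subgraph of $G$. *)

theory Defs
  imports "HOL-Computational_Algebra.Primes"
begin

definition simple_graph :: "'a set \<Rightarrow> 'a set set \<Rightarrow> bool" where
  "simple_graph V E \<longleftrightarrow> finite V \<and> (\<forall>e\<in>E. e \<subseteq> V \<and> card e = 2)"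

definition graph_adj :: "'a set set \<Rightarrow> 'a \<Rightarrow> 'a \<Rightarrow> bool" where
  "graph_adj E u v \<longleftrightarrow> {u, v} \<in> E"

definition connected_graph :: "'a set \<Rightarrow> 'a set set \<Rightarrow> bool" where
  "connected_graph V E \<longleftrightarrow> (\<forall>u\<in>V. \<forall>v\<in>V. (graph_adj E)\<^sup>*\<^sup>* u v)"

definition has_cycle :: "'a set set \<Rightarrow> bool" where
  "has_cycle E \<longleftrightarrow> (\<exists>xs. length xs \<ge> 3 \<and> distinct xs \<and>
      (\<forall>i. i + 1 < length xs \<longrightarrow> graph_adj E (xs ! i) (xs ! (i + 1))) \<and>
      graph_adj E (last xs) (hd xs))"

definition is_tree :: "'a set \<Rightarrow> 'a set set \<Rightarrow> bool" where
  "is_tree V E \<longleftrightarrow> simple_graph V E \<and> V \<noteq> {} \<and> connected_graph V E \<and> \<not> has_cycle E"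

definition subgraph_embeds :: "'a set \<Rightarrow> 'a set set \<Rightarrow> 'b set \<Rightarrow> 'b set set \<Rightarrow> bool" where
  "subgraph_embeds V E W F \<longleftrightarrow>
     (\<exists>f. inj_on f V \<and> f ` V \<subseteq> W \<and> (\<forall>e\<in>E. f ` e \<in> F))"

text \<open>G of order n = card W is tree-complete if every tree of order n embeds.
  Trees are taken with vertex sets of natural numbers (every finite tree is
  isomorphic to one of these).\<close>
definition tree_complete :: "'b set \<Rightarrow> 'b set set \<Rightarrow> bool" where
  "tree_complete W F \<longleftrightarrow>
     (\<forall>(T :: nat set) TE. is_tree T TE \<and> card T = card W \<longrightarrow> subgraph_embeds T TE W F)"

definition SP_vertices :: "nat \<Rightarrow> nat set" where
  "SP_vertices n = {1..n}"

definition SP_edges :: "nat \<Rightarrow> nat set set" where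
  "SP_edges n = {{u, v} | u v. u \<in> {1..n} \<and> v \<in> {1..n} \<and> u \<noteq> v \<and> coprime u v}"

end

theory Submission
  imports Defs
begin

lemma adj_sym: "graph_adj E u v \<Longrightarrow> graph_adj E v u"
  by (simp add: graph_adj_def insert_commute)

lemma rtp_sym: "(graph_adj E)\<^sup>*\<^sup>* u v \<Longrightarrow> (graph_adj E)\<^sup>*\<^sup>* v u"
proof (induction rule: rtranclp_induct)
  case base then show ?case by simp
next
  case (step b c)
  then show ?case by (meson adj_sym converse_rtranclp_into_rtranclp)
qed

lemma rtp_lift:
  assumes "\<And>x y. R x y \<Longrightarrow> S\<^sup>*\<^sup>* x y" and "R\<^sup>*\<^sup>* a b"
  shows "S\<^sup>*\<^sup>* a b"
  using assms(2)
proof (induction rule: rtranclp_induct)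
  case base then show ?case by simp
next
  case (step b c)
  then show ?case using assms(1) by (meson rtranclp_trans)
qed

lemma rtranclp_distinct_path:
  assumes "R\<^sup>*\<^sup>* u v"
  shows "\<exists>ps. ps \<noteq> [] \<and> distinct ps \<and> hd ps = u \<and> last ps = v \<and>
           (\<forall>i. i + 1 < length ps \<longrightarrow> R (ps!i) (ps!(i+1)))"
  using assms
proof (induction rule: rtranclp_induct)
  case base show ?case by (rule exI[of _ "[u]"]) auto
next
  case (step b c)
  then obtain ps where ps: "ps \<noteq> []" "distinct ps" "hd ps = u" "last ps = b"
    "\<forall>i. i + 1 < length ps \<longrightarrow> R (ps!i) (ps!(i+1))" by blast
  show ?case
  proof (cases "c \<in> set ps")
    case True
    then obtain j where j: "j < length ps" "ps!j = c" by (auto simp: in_set_conv_nth)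
    let ?qs = "take (j+1) ps"
    have "last ?qs = c" using j by (simp add: take_Suc_conv_app_nth)
    moreover have "?qs \<noteq> []" using ps(1) by simp
    moreover have "distinct ?qs" using ps(2) by simp
    moreover have "hd ?qs = u" using ps(3) by simp
    moreover have "\<forall>i. i + 1 < length ?qs \<longrightarrow> R (?qs!i) (?qs!(i+1))"
      using ps(5) j by auto
    ultimately show ?thesis by blast
  next
    case False
    let ?qs = "ps @ [c]"
    have "\<forall>i. i + 1 < length ?qs \<longrightarrow> R (?qs!i) (?qs!(i+1))"
    proof (intro allI impI)
      fix i assume i: "i + 1 < length ?qs"
      show "R (?qs!i) (?qs!(i+1))"
      proof (cases "i + 1 < length ps")
        case True then show ?thesis using ps(5) by (simp add: nth_append)
      next
        case False
        then have "i + 1 = length ps" using i by simp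
        then have ii: "i = length ps - 1" by simp
        then have "?qs!i = b" "?qs!(i+1) = c" using ps(1) ps(4)
          by (auto simp: nth_append last_conv_nth ii)
        then show ?thesis using step(2) by simp
      qed
    qed
    moreover have "?qs \<noteq> []" "distinct ?qs" "hd ?qs = u" "last ?qs = c"
      using ps False by auto
    ultimately show ?thesis by blast
  qed
qed

definition acyc :: "'a set set \<Rightarrow> bool" where
  "acyc E \<longleftrightarrow> (\<forall>u v. {u,v} \<in> E \<longrightarrow> u \<noteq> v \<longrightarrow> \<not> (graph_adj (E - {{u,v}}))\<^sup>*\<^sup>* u v)"

lemma cycle_not_acyc:
  assumes "has_cycle E" shows "\<not> acyc E"
proof -
  obtain xs where xs: "length xs \<ge> 3" "distinct xs"
    "\<forall>i. i + 1 < length xs \<longrightarrow> graph_adj E (xs ! i) (xs ! (i + 1))"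
    "graph_adj E (last xs) (hd xs)"
    using assms unfolding has_cycle_def by blast
  define L where "L = length xs"
  have ne: "xs \<noteq> []" using xs(1) by auto
  have lst: "last xs = xs!(L-1)" using ne by (simp add: last_conv_nth L_def)
  have hd: "hd xs = xs!0" using ne by (simp add: hd_conv_nth)
  have uv: "xs!0 \<noteq> xs!(L-1)" using xs(1,2) nth_eq_iff_index_eq[of xs 0 "L-1"] ne by (simp add: L_def)
  let ?F = "E - {{xs!0, xs!(L-1)}}"
  have "\<forall>j<L. (graph_adj ?F)\<^sup>*\<^sup>* (xs!0) (xs!j)"
  proof (intro allI)
    fix j show "j < L \<longrightarrow> (graph_adj ?F)\<^sup>*\<^sup>* (xs!0) (xs!j)"
    proof (induction j)
      case 0 then show ?case by simp
    next
      case (Suc j)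
      show ?case
      proof
        assume j: "Suc j < L"
        have e: "{xs!j, xs!(j+1)} \<in> E" using xs(3) j by (auto simp: graph_adj_def L_def)
        have ne2: "{xs!j, xs!(j+1)} \<noteq> {xs!0, xs!(L-1)}"
        proof
          assume "{xs!j, xs!(j+1)} = {xs!0, xs!(L-1)}"
          then have "(xs!j = xs!0 \<and> xs!(j+1) = xs!(L-1)) \<or> (xs!j = xs!(L-1) \<and> xs!(j+1) = xs!0)"
            by (simp add: doubleton_eq_iff)
          then show False
          proof
            assume a: "xs!j = xs!0 \<and> xs!(j+1) = xs!(L-1)"
            have "j < length xs" "j+1 < length xs" "L - 1 < length xs" "0 < length xs" using j xs(1) by (auto simp: L_def)
            then have "j = 0" "j + 1 = L - 1" using a xs(2) nth_eq_iff_index_eq by metis+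
            then show False using xs(1) by (simp add: L_def)
          next
            assume a: "xs!j = xs!(L-1) \<and> xs!(j+1) = xs!0"
            have "j < length xs" "L - 1 < length xs" using j xs(1) by (auto simp: L_def)
            then have "j = L - 1" using a xs(2) nth_eq_iff_index_eq by metis
            then show False using j by simp
          qed
        qed
        have "graph_adj ?F (xs!j) (xs!(Suc j))" using e ne2 by (simp add: graph_adj_def)
        then show "(graph_adj ?F)\<^sup>*\<^sup>* (xs!0) (xs!Suc j)" using Suc j by auto
      qed
    qed
  qed
  then have p: "(graph_adj ?F)\<^sup>*\<^sup>* (xs!0) (xs!(L-1))" using xs(1) by (simp add: L_def)
  have "{xs!0, xs!(L-1)} \<in> E" using xs(4) lst hd by (simp add: graph_adj_def insert_commute)
  then show ?thesis using p uv unfolding acyc_def by blast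
qed

lemma not_acyc_cycle:
  assumes "\<not> acyc E" shows "has_cycle E"
proof -
  obtain u v where uv: "{u,v} \<in> E" "u \<noteq> v" and p: "(graph_adj (E - {{u,v}}))\<^sup>*\<^sup>* u v"
    using assms unfolding acyc_def by blast
  obtain ps where ps: "ps \<noteq> []" "distinct ps" "hd ps = u" "last ps = v"
    "\<forall>i. i + 1 < length ps \<longrightarrow> graph_adj (E - {{u,v}}) (ps!i) (ps!(i+1))"
    using rtranclp_distinct_path[OF p] by blast
  have l3: "length ps \<ge> 3"
  proof (rule ccontr)
    assume "\<not> ?thesis"
    moreover have "length ps \<noteq> 0" using ps(1) by simp
    ultimately have "length ps = 1 \<or> length ps = 2" by linarith
    then show False
    proof
      assume "length ps = 1" then have "hd ps = last ps" by (cases ps) auto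
      then show False using ps uv by simp
    next
      assume "length ps = 2"
      then have "ps!0 = u" "ps!1 = v" using ps(1,3,4) by (auto simp: hd_conv_nth last_conv_nth)
      then show False using ps(5) \<open>length ps = 2\<close> by (auto simp: graph_adj_def)
    qed
  qed
  have "\<forall>i. i + 1 < length ps \<longrightarrow> graph_adj E (ps!i) (ps!(i+1))"
    using ps(5) by (auto simp: graph_adj_def)
  moreover have "graph_adj E (last ps) (hd ps)" using ps uv by (simp add: graph_adj_def insert_commute)
  ultimately show ?thesis unfolding has_cycle_def using l3 ps(2) by blast
qed

lemma acyc_iff: "acyc E \<longleftrightarrow> \<not> has_cycle E"
  using cycle_not_acyc not_acyc_cycle by blast

definition contr :: "'a set set \<Rightarrow> 'a \<Rightarrow> 'a \<Rightarrow> 'a set set" where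
  "contr E w z = {e\<in>E. w \<notin> e} \<union> {{z,y} | y. {w,y} \<in> E \<and> y \<noteq> z}"

lemma contr_keep: "e \<in> E \<Longrightarrow> w \<notin> e \<Longrightarrow> e \<in> contr E w z"
  by (simp add: contr_def)

lemma contract_tree:
  assumes T: "is_tree V E" and e: "{w,z} \<in> E"
  shows "is_tree (V - {w}) (contr E w z)"
proof -
  let ?E' = "contr E w z"
  have sg: "finite V" "\<And>e. e \<in> E \<Longrightarrow> e \<subseteq> V \<and> card e = 2"
    using T unfolding is_tree_def simple_graph_def by auto
  have conn: "connected_graph V E" and nc: "\<not> has_cycle E" using T unfolding is_tree_def by auto
  have wz: "w \<noteq> z" using sg(2)[OF e] by auto
  have wV: "w \<in> V" and zV: "z \<in> V" using sg(2)[OF e] by auto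
  have nbr: "y \<in> V \<and> y \<noteq> w" if "{w,y} \<in> E" for y
    using sg(2)[OF that] by (auto simp: card_insert_if split: if_splits)
  have sg': "simple_graph (V - {w}) ?E'"
    unfolding simple_graph_def
  proof (rule conjI)
    show "finite (V - {w})" using sg(1) by simp
  next
    show "\<forall>f\<in>?E'. f \<subseteq> V - {w} \<and> card f = 2"
    proof
    fix f assume "f \<in> ?E'"
    then consider "f \<in> E" "w \<notin> f" | y where "f = {z,y}" "{w,y} \<in> E" "y \<noteq> z"
      unfolding contr_def by blast
    then show "f \<subseteq> V - {w} \<and> card f = 2"
    proof cases
      case 1 then show ?thesis using sg(2)[of f] by auto
    next
      case 2 then show ?thesis using nbr[of y] zV wz by auto
    qed
    qed
  qed
  define \<pi> where "\<pi> x = (if x = w then z else x)" for x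
  have pstep: "\<pi> a = \<pi> b \<or> graph_adj ?E' (\<pi> a) (\<pi> b)" if "graph_adj E a b" for a b
  proof -
    have ab: "{a,b} \<in> E" using that by (simp add: graph_adj_def)
    show ?thesis
    proof (cases "a = w")
      case True
      show ?thesis
      proof (cases "b = z")
        case True then show ?thesis using \<open>a = w\<close> by (simp add: \<pi>_def)
      next
        case False
        have "b \<noteq> w" using nbr[of b] ab True by auto
        then show ?thesis using False True ab
          by (auto simp: \<pi>_def graph_adj_def contr_def)
      qed
    next
      case False
      show ?thesis
      proof (cases "b = w")
        case True
        have ba: "{w,a} \<in> E" using ab True by (simp add: insert_commute)
        show ?thesis
        proof (cases "a = z")
          case True then show ?thesis using \<open>b = w\<close> by (simp add: \<pi>_def)
        next
          case False
          have "{\<pi> a, \<pi> b} = {z, a}" using \<open>a \<noteq> w\<close> \<open>b = w\<close> by (auto simp: \<pi>_def)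
          then show ?thesis using False ba by (auto simp: graph_adj_def contr_def)
        qed
      next
        case False
        then show ?thesis using \<open>a \<noteq> w\<close> ab by (auto simp: \<pi>_def graph_adj_def contr_def)
      qed
    qed
  qed
  have lift: "(graph_adj ?E')\<^sup>*\<^sup>* (\<pi> a) (\<pi> b)" if "(graph_adj E)\<^sup>*\<^sup>* a b" for a b
    using that
  proof (induction rule: rtranclp_induct)
    case base then show ?case by simp
  next
    case (step b c)
    then show ?case using pstep[of b c] by (metis rtranclp.rtrancl_into_rtrancl)
  qed
  have conn': "connected_graph (V - {w}) ?E'"
    unfolding connected_graph_def
  proof (intro ballI)
    fix a b assume "a \<in> V - {w}" "b \<in> V - {w}"
    then have "(graph_adj E)\<^sup>*\<^sup>* a b" "\<pi> a = a" "\<pi> b = b"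
      using conn unfolding connected_graph_def \<pi>_def by auto
    then show "(graph_adj ?E')\<^sup>*\<^sup>* a b" using lift by metis
  qed
  have acE: "acyc E" using nc acyc_iff by blast
  have acE': "acyc ?E'"
    unfolding acyc_def
  proof (intro allI impI notI)
    fix a b assume ab: "{a,b} \<in> ?E'" "a \<noteq> b" and p: "(graph_adj (?E' - {{a,b}}))\<^sup>*\<^sup>* a b"
    from ab(1) consider "{a,b} \<in> E" "w \<notin> {a,b}" | y0 where "{a,b} = {z,y0}" "{w,y0} \<in> E" "y0 \<noteq> z"
      unfolding contr_def by blast
    then show False
    proof cases
      case 1
      have "(graph_adj (E - {{a,b}}))\<^sup>*\<^sup>* a b"
      proof (rule rtp_lift[OF _ p])
        fix x y assume xy: "graph_adj (?E' - {{a,b}}) x y"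
        then have xy': "{x,y} \<in> ?E'" "{x,y} \<noteq> {a,b}" by (auto simp: graph_adj_def)
        from xy'(1) consider "{x,y} \<in> E" "w \<notin> {x,y}" | y' where "{x,y} = {z,y'}" "{w,y'} \<in> E" "y' \<noteq> z"
          unfolding contr_def by blast
        then show "(graph_adj (E - {{a,b}}))\<^sup>*\<^sup>* x y"
        proof cases
          case 1
          then have "graph_adj (E - {{a,b}}) x y" using xy'(2) by (simp add: graph_adj_def)
          then show ?thesis by simp
        next
          case 2
          have e1: "graph_adj (E - {{a,b}}) x w" "graph_adj (E - {{a,b}}) w y"
            using 2 e \<open>w \<notin> {a,b}\<close> by (auto simp: graph_adj_def doubleton_eq_iff insert_commute)
          then show ?thesis by (meson converse_rtranclp_into_rtranclp r_into_rtranclp)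
        qed
      qed
      then show False using acE 1 ab(2) unfolding acyc_def by blast
    next
      case 2
      have wy0: "w \<noteq> y0" using nbr[OF 2(2)] by auto
      show False
      proof (cases "{z,y0} \<in> E")
        case True
        have "graph_adj (E - {{z,y0}}) z w" "graph_adj (E - {{z,y0}}) w y0"
          using e 2 wy0 wz by (auto simp: graph_adj_def doubleton_eq_iff insert_commute)
        then have "(graph_adj (E - {{z,y0}}))\<^sup>*\<^sup>* z y0"
          by (meson converse_rtranclp_into_rtranclp r_into_rtranclp)
        then show False using acE True 2(3) unfolding acyc_def by blast
      next
        case False
        let ?G = "E - {{w,y0}}"
        have q: "(graph_adj ?G)\<^sup>*\<^sup>* a b"
        proof (rule rtp_lift[OF _ p])
          fix x y assume xy: "graph_adj (?E' - {{a,b}}) x y"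
          then have xy': "{x,y} \<in> ?E'" "{x,y} \<noteq> {z,y0}" using 2(1) by (auto simp: graph_adj_def)
          from xy'(1) consider "{x,y} \<in> E" "w \<notin> {x,y}" | y' where "{x,y} = {z,y'}" "{w,y'} \<in> E" "y' \<noteq> z"
            unfolding contr_def by blast
          then show "(graph_adj ?G)\<^sup>*\<^sup>* x y"
          proof cases
            case 1
            then have "graph_adj ?G x y" by (auto simp: graph_adj_def doubleton_eq_iff)
            then show ?thesis by simp
          next
            case 2
            then have "y' \<noteq> y0" using xy'(2) by auto
            then have e1: "graph_adj ?G x w" "graph_adj ?G w y"
              using 2 e wy0 \<open>y0 \<noteq> z\<close> by (auto simp: graph_adj_def doubleton_eq_iff insert_commute)
            then show ?thesis by (meson converse_rtranclp_into_rtranclp r_into_rtranclp)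
          qed
        qed
        have q2: "(graph_adj ?G)\<^sup>*\<^sup>* y0 z"
          using q 2(1) wz by (auto simp: doubleton_eq_iff intro: rtp_sym)
        have "graph_adj ?G z w" using e 2(3) wz by (auto simp: graph_adj_def doubleton_eq_iff insert_commute)
        then have "(graph_adj ?G)\<^sup>*\<^sup>* y0 w" using q2 by (meson rtranclp.rtrancl_into_rtrancl)
        then have "(graph_adj ?G)\<^sup>*\<^sup>* w y0" by (rule rtp_sym)
        then show False using acE 2(2) wy0 unfolding acyc_def by blast
      qed
    qed
  qed
  show ?thesis unfolding is_tree_def
    using sg' conn' acE' acyc_iff zV wz by auto
qed

definition tpath :: "'a set \<Rightarrow> 'a set set \<Rightarrow> 'a list \<Rightarrow> bool" where
  "tpath V E ps \<longleftrightarrow> distinct ps \<and> set ps \<subseteq> V \<and>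
     (\<forall>i. i + 1 < length ps \<longrightarrow> graph_adj E (ps!i) (ps!(i+1)))"

lemma chord_cycle:
  assumes p: "tpath V E ps" and ij: "i + 2 \<le> j" "j < length ps"
    and a: "graph_adj E (ps!j) (ps!i)"
  shows "has_cycle E"
proof -
  let ?xs = "take (j+1-i) (drop i ps)"
  have len: "length ?xs = j+1-i" using ij by simp
  have nth: "?xs!k = ps!(i+k)" if "k < j+1-i" for k using that ij by simp
  have "distinct ?xs" using p by (simp add: tpath_def)
  moreover have "length ?xs \<ge> 3" using len ij by simp
  moreover have "\<forall>k. k + 1 < length ?xs \<longrightarrow> graph_adj E (?xs ! k) (?xs ! (k + 1))"
  proof (intro allI impI)
    fix k assume k: "k + 1 < length ?xs"
    then have "?xs!k = ps!(i+k)" "?xs!(k+1) = ps!(i+k+1)" using nth len by auto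
    moreover have "i + k + 1 < length ps" using k len ij by simp
    ultimately show "graph_adj E (?xs ! k) (?xs ! (k + 1))" using p unfolding tpath_def by simp
  qed
  moreover have "last ?xs = ps!j"
  proof -
    have "?xs \<noteq> []" using len ij by auto
    then have "last ?xs = ?xs!(j+1-i-1)" using len by (simp add: last_conv_nth)
    also have "\<dots> = ps!j" using nth[of "j-i"] ij by simp
    finally show ?thesis .
  qed
  moreover have "hd ?xs = ps!i"
  proof -
    have "?xs \<noteq> []" using len ij by auto
    then have "hd ?xs = ?xs!0" by (simp add: hd_conv_nth)
    then show ?thesis using nth[of 0] ij by simp
  qed
  ultimately show ?thesis unfolding has_cycle_def using a by metis
qed

lemma longest_path:
  assumes T: "is_tree V E" and c: "card V \<ge> 2"
  shows "\<exists>ps. tpath V E ps \<and> length ps \<ge> 2 \<and> (\<forall>qs. tpath V E qs \<longrightarrow> length qs \<le> length ps)"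
proof -
  have fin: "finite V" using T by (simp add: is_tree_def simple_graph_def)
  have sg: "\<And>e. e \<in> E \<Longrightarrow> e \<subseteq> V \<and> card e = 2" using T by (simp add: is_tree_def simple_graph_def)
  obtain a b where ab: "a \<in> V" "b \<in> V" "a \<noteq> b"
  proof -
    have "\<exists>a\<in>V. \<exists>b\<in>V. a \<noteq> b"
      using c card_le_Suc0_iff_eq[OF fin] by auto
    then show ?thesis using that by blast
  qed
  have "(graph_adj E)\<^sup>*\<^sup>* a b" using T ab unfolding is_tree_def connected_graph_def by blast
  then obtain d where d: "graph_adj E a d" using ab(3) by (metis converse_rtranclpE)
  have ed: "{a,d} \<in> E" using d by (simp add: graph_adj_def)
  have "tpath V E [a,d]" using sg[OF ed] ed by (auto simp: tpath_def graph_adj_def card_insert_if split: if_splits)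
  then have P0: "\<exists>ps. tpath V E ps \<and> length ps = 2" by force
  have bnd: "\<forall>k. (\<exists>ps. tpath V E ps \<and> length ps = k) \<longrightarrow> k \<le> card V"
  proof (intro allI impI)
    fix k assume "\<exists>ps. tpath V E ps \<and> length ps = k"
    then obtain ps where ps: "tpath V E ps" "length ps = k" by blast
    then have "card (set ps) = k" by (simp add: tpath_def distinct_card)
    moreover have "card (set ps) \<le> card V" using ps fin by (intro card_mono) (auto simp: tpath_def)
    ultimately show "k \<le> card V" by simp
  qed
  obtain k where k: "\<exists>ps. tpath V E ps \<and> length ps = k"
    "\<forall>y. (\<exists>ps. tpath V E ps \<and> length ps = y) \<longrightarrow> y \<le> k"
    using Nat.ex_has_greatest_nat[of "\<lambda>k. \<exists>ps. tpath V E ps \<and> length ps = k", OF P0 bnd] by blast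
  then obtain ps where "tpath V E ps" "length ps = k" by blast
  moreover have "k \<ge> 2" using k(2) P0 by blast
  ultimately show ?thesis using k(2) by blast
qed

lemma hd_leaf:
  assumes T: "is_tree V E" and p: "tpath V E ps" and L: "length ps \<ge> 2"
    and mx: "\<And>qs. tpath V E qs \<Longrightarrow> length qs \<le> length ps"
    and e: "{ps!0, y} \<in> E"
  shows "y = ps!1"
proof -
  have sg: "\<And>e. e \<in> E \<Longrightarrow> e \<subseteq> V \<and> card e = 2" using T by (simp add: is_tree_def simple_graph_def)
  have nc: "\<not> has_cycle E" using T by (simp add: is_tree_def)
  have yV: "y \<in> V" using sg[OF e] by auto
  have yne: "y \<noteq> ps!0" using sg[OF e] by (auto simp: card_insert_if split: if_splits)
  show ?thesis
  proof (cases "y \<in> set ps")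
    case False
    have "tpath V E (y # ps)"
      unfolding tpath_def
    proof (intro conjI allI impI)
      show "distinct (y # ps)" using p False by (simp add: tpath_def)
      show "set (y # ps) \<subseteq> V" using p yV by (simp add: tpath_def)
    next
      fix i assume i: "i + 1 < length (y # ps)"
      show "graph_adj E ((y # ps) ! i) ((y # ps) ! (i + 1))"
      proof (cases i)
        case 0 then show ?thesis using e by (simp add: graph_adj_def insert_commute)
      next
        case (Suc k) then show ?thesis using p i by (simp add: tpath_def)
      qed
    qed
    then show ?thesis using mx by fastforce
  next
    case True
    then obtain j where j: "j < length ps" "ps!j = y" by (auto simp: in_set_conv_nth)
    show ?thesis
    proof (cases "j \<ge> 2")
      case True
      have "graph_adj E (ps!j) (ps!0)" using e j by (simp add: graph_adj_def insert_commute)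
      then have "has_cycle E" using chord_cycle[OF p, of 0 j] True j by simp
      then show ?thesis using nc by simp
    next
      case False
      then have "j = 0 \<or> j = 1" by auto
      then show ?thesis using j yne by auto
    qed
  qed
qed

lemma tpath_rev: "tpath V E ps \<Longrightarrow> tpath V E (rev ps)"
  unfolding tpath_def
proof (intro conjI allI impI)
  assume p: "distinct ps \<and> set ps \<subseteq> V \<and> (\<forall>i. i + 1 < length ps \<longrightarrow> graph_adj E (ps ! i) (ps ! (i + 1)))"
  then show "distinct (rev ps)" "set (rev ps) \<subseteq> V" by auto
  fix i assume i: "i + 1 < length (rev ps)"
  have "graph_adj E (ps ! (length ps - 2 - i)) (ps ! (length ps - 2 - i + 1))" using p i by auto
  moreover have "length ps - 2 - i + 1 = length ps - 1 - i" using i by simp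
  ultimately show "graph_adj E (rev ps ! i) (rev ps ! (i + 1))" using i
    by (auto simp: rev_nth adj_sym Suc_diff_Suc numeral_2_eq_2)
qed

lemma last_leaf:
  assumes T: "is_tree V E" and p: "tpath V E ps" and L: "length ps \<ge> 2"
    and mx: "\<And>qs. tpath V E qs \<Longrightarrow> length qs \<le> length ps"
    and e: "{ps!(length ps - 1), y} \<in> E"
  shows "y = ps!(length ps - 2)"
proof -
  have r0: "rev ps ! 0 = ps!(length ps - 1)" using L by (subst rev_nth) auto
  have "y = rev ps ! 1"
    using hd_leaf[OF T tpath_rev[OF p]] L mx e unfolding r0 by simp
  then show ?thesis using L by (simp add: rev_nth numeral_2_eq_2)
qed

lemma closure:
  assumes conn: "connected_graph V E" and S: "s \<in> S" "S \<subseteq> V"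
    and cl: "\<And>a b. {a,b} \<in> E \<Longrightarrow> a \<in> S \<Longrightarrow> b \<in> S"
  shows "V \<subseteq> S"
proof
  fix v assume v: "v \<in> V"
  have "(graph_adj E)\<^sup>*\<^sup>* s v" using conn S v unfolding connected_graph_def by blast
  then show "v \<in> S"
  proof (induction rule: rtranclp_induct)
    case base then show ?case using S by simp
  next
    case (step b c) then show ?case using cl by (auto simp: graph_adj_def)
  qed
qed

lemma sp_mem: "a \<in> {1..N} \<Longrightarrow> b \<in> {1..N} \<Longrightarrow> a \<noteq> b \<Longrightarrow> coprime a b \<Longrightarrow> {a,b} \<in> SP_edges N"
  unfolding SP_edges_def by blast

lemma sp_mono: "m \<le> N \<Longrightarrow> SP_edges m \<subseteq> SP_edges N"
  unfolding SP_edges_def by fastforce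

lemma prime_cop: "prime (p::nat) \<Longrightarrow> 0 < k \<Longrightarrow> k < p \<Longrightarrow> coprime p k"
  by (meson nat_dvd_not_less prime_imp_coprime)

lemma extend:
  assumes sg: "simple_graph V E" and sub: "V' \<subseteq> V" and mN: "m \<le> N"
    and emb: "subgraph_embeds V' E' {1..m} (SP_edges m)"
    and keep: "\<And>e. e \<in> E \<Longrightarrow> e \<subseteq> V' \<Longrightarrow> e \<in> E'"
    and hinj: "inj_on h (V - V')" and hr: "h ` (V - V') \<subseteq> {m<..N}"
    and cop: "\<And>a b k. {a,b} \<in> E \<Longrightarrow> a \<notin> V' \<Longrightarrow> b \<in> V' \<Longrightarrow> k \<in> {1..m} \<Longrightarrow> coprime (h a) k"
    and cop2: "\<And>a b. {a,b} \<in> E \<Longrightarrow> a \<notin> V' \<Longrightarrow> b \<notin> V' \<Longrightarrow> coprime (h a) (h b)"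
  shows "subgraph_embeds V E (SP_vertices N) (SP_edges N)"
proof -
  obtain g where g: "inj_on g V'" "g ` V' \<subseteq> {1..m}" "\<forall>e\<in>E'. g ` e \<in> SP_edges m"
    using emb unfolding subgraph_embeds_def by blast
  have sgE: "\<And>e. e \<in> E \<Longrightarrow> e \<subseteq> V \<and> card e = 2" using sg by (simp add: simple_graph_def)
  define f where "f x = (if x \<in> V' then g x else h x)" for x
  have finj: "inj_on f V"
    unfolding inj_on_def
  proof (intro ballI impI)
    fix x y assume xy: "x \<in> V" "y \<in> V" "f x = f y"
    show "x = y"
    proof (cases "x \<in> V'"; cases "y \<in> V'")
      assume "x \<in> V'" "y \<in> V'" then show ?thesis using xy g(1) by (simp add: f_def inj_on_def)
    next
      assume a: "x \<in> V'" "y \<notin> V'"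
      then have "g x \<le> m" "h y > m" using g(2) hr xy by auto
      then show ?thesis using a xy by (simp add: f_def)
    next
      assume a: "x \<notin> V'" "y \<in> V'"
      then have "g y \<le> m" "h x > m" using g(2) hr xy by auto
      then show ?thesis using a xy by (simp add: f_def)
    next
      assume "x \<notin> V'" "y \<notin> V'" then show ?thesis using xy hinj by (simp add: f_def inj_on_def)
    qed
  qed
  have frange: "f x \<in> {1..N}" if "x \<in> V" for x
    using that g(2) hr mN by (auto simp: f_def)
  have edgeSP: "{f a, f b} \<in> SP_edges N" if ab: "{a,b} \<in> E" "a \<notin> V'" for a b
  proof -
    have abV: "a \<in> V" "b \<in> V" "a \<noteq> b" using sgE[OF ab(1)] by (auto simp: card_insert_if split: if_splits)
    have "f a \<noteq> f b" using finj abV unfolding inj_on_def by blast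
    moreover have "coprime (f a) (f b)"
    proof (cases "b \<in> V'")
      case True
      then have "g b \<in> {1..m}" using g(2) by auto
      then show ?thesis using cop[OF ab(1) ab(2) True] True ab(2) by (simp add: f_def)
    next
      case False then show ?thesis using cop2[OF ab(1) ab(2) False] ab(2) by (simp add: f_def)
    qed
    ultimately show ?thesis using sp_mem frange abV by blast
  qed
  have "\<forall>e\<in>E. f ` e \<in> SP_edges N"
  proof
    fix e assume e: "e \<in> E"
    then obtain a b where ab: "e = {a,b}" "a \<noteq> b" using sgE[OF e] card_2_iff by metis
    show "f ` e \<in> SP_edges N"
    proof (cases "a \<in> V' \<and> b \<in> V'")
      case True
      then have "e \<in> E'" using keep e ab by auto
      then have "g ` e \<in> SP_edges N" using g(3) sp_mono[OF mN] by blast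
      moreover have "f ` e = g ` e" using True ab by (auto simp: f_def)
      ultimately show ?thesis by simp
    next
      case False
      then show ?thesis
      proof (cases "a \<in> V'")
        case True
        then have "b \<notin> V'" using False by simp
        moreover have "{b,a} \<in> E" using e ab by (simp add: insert_commute)
        ultimately have "{f b, f a} \<in> SP_edges N" using edgeSP by blast
        then show ?thesis using ab by (simp add: insert_commute)
      next
        case False then show ?thesis using edgeSP e ab by simp
      qed
    qed
  qed
  then show ?thesis unfolding subgraph_embeds_def SP_vertices_def
    using finj frange by blast
qed

lemma tc_use:
  fixes T :: "nat set"
  assumes "tree_complete (SP_vertices m) (SP_edges m)" "is_tree T TE" "card T = m"
  shows "subgraph_embeds T TE {1..m} (SP_edges m)"
proof -
  have "card {1..m::nat} = m" by simp
  moreover have "is_tree T TE \<and> card T = card (SP_vertices m) \<longrightarrow> subgraph_embeds T TE (SP_vertices m) (SP_edges m)"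
    using assms(1) unfolding tree_complete_def by blast
  ultimately show ?thesis using assms(2,3) unfolding SP_vertices_def by simp
qed

lemma tree_sg: "is_tree V E \<Longrightarrow> e \<in> E \<Longrightarrow> e \<subseteq> V \<and> card e = 2"
  by (simp add: is_tree_def simple_graph_def)

lemma tree_edge_ne: "is_tree V E \<Longrightarrow> {a,b} \<in> E \<Longrightarrow> a \<in> V \<and> b \<in> V \<and> a \<noteq> b"
  using tree_sg[of V E "{a,b}"] by (auto simp: card_insert_if split: if_splits)

lemma len3:
  assumes T: "is_tree V E" and c: "card V \<ge> 3" and p: "tpath V E ps" and L: "length ps \<ge> 2"
    and mx: "\<And>qs. tpath V E qs \<Longrightarrow> length qs \<le> length ps"
  shows "length ps \<ge> 3"
proof (rule ccontr)
  assume "\<not> ?thesis"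
  then have L2: "length ps = 2" using L by simp
  have fin: "finite V" using T by (simp add: is_tree_def simple_graph_def)
  have S: "{ps!0, ps!1} \<subseteq> V" using p L2 by (auto simp: tpath_def)
  have "V \<subseteq> {ps!0, ps!1}"
  proof (rule closure[of V E "ps!0"])
    show "connected_graph V E" using T by (simp add: is_tree_def)
    show "ps!0 \<in> {ps!0, ps!1}" by simp
    show "{ps!0, ps!1} \<subseteq> V" by (rule S)
  next
    fix a b assume ab: "{a,b} \<in> E" "a \<in> {ps!0, ps!1}"
    show "b \<in> {ps!0, ps!1}"
    proof (cases "a = ps!0")
      case True then show ?thesis using hd_leaf[OF T p L mx] ab by auto
    next
      case False
      then have "a = ps!(length ps - 1)" using ab L2 by simp
      then show ?thesis using last_leaf[OF T p L mx] ab L2 by auto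
    qed
  qed
  then have "card V \<le> card {ps!0, ps!1}" by (simp add: card_mono)
  also have "\<dots> \<le> 2" by (simp add: card_insert_if)
  finally show False using c by simp
qed

lemma stepA:
  assumes m1: "m \<ge> 1" and tc: "tree_complete (SP_vertices m) (SP_edges m)" and pr: "prime (m+1)"
  shows "tree_complete (SP_vertices (m+1)) (SP_edges (m+1))"
  unfolding tree_complete_def
proof (intro allI impI, elim conjE)
  fix T :: "nat set" and TE assume T: "is_tree T TE" and c: "card T = card (SP_vertices (m+1))"
  have cT: "card T = m + 1" using c by (simp add: SP_vertices_def)
  have c2: "card T \<ge> 2" using cT m1 by simp
  obtain ps where ps0: "tpath T TE ps" "length ps \<ge> 2" "\<forall>qs. tpath T TE qs \<longrightarrow> length qs \<le> length ps"
    using longest_path[OF T c2] by blast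
  have ps: "tpath T TE ps" "length ps \<ge> 2" "\<And>qs. tpath T TE qs \<Longrightarrow> length qs \<le> length ps"
    using ps0 by auto
  define l where "l = ps!0"
  define w where "w = ps!1"
  have "graph_adj TE (ps!0) (ps!(0+1))" using ps(1,2) unfolding tpath_def by simp
  then have e: "{l,w} \<in> TE" by (simp add: graph_adj_def l_def w_def)
  have lT: "l \<in> T" using tree_edge_ne[OF T e] by simp
  have T': "is_tree (T - {l}) (contr TE l w)" by (rule contract_tree[OF T e])
  have fin: "finite T" using T by (simp add: is_tree_def simple_graph_def)
  have cT': "card (T - {l}) = m" using cT lT fin by simp
  have emb: "subgraph_embeds (T - {l}) (contr TE l w) {1..m} (SP_edges m)"
    by (rule tc_use[OF tc T' cT'])
  have TT: "T - (T - {l}) = {l}" using lT by auto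
  show "subgraph_embeds T TE (SP_vertices (m + 1)) (SP_edges (m + 1))"
  proof (rule extend[OF _ _ _ emb, where h = "\<lambda>_. m+1"])
    show "simple_graph T TE" using T by (simp add: is_tree_def)
    show "T - {l} \<subseteq> T" by auto
    show "m \<le> m + 1" by simp
    show "e \<in> contr TE l w" if "e \<in> TE" "e \<subseteq> T - {l}" for e
    proof -
      have "l \<notin> e" using that(2) by auto
      then show ?thesis using contr_keep that(1) by metis
    qed
    show "inj_on (\<lambda>_. m + 1) (T - (T - {l}))" unfolding TT by simp
    show "(\<lambda>_. m + 1) ` (T - (T - {l})) \<subseteq> {m<..m + 1}" unfolding TT by simp
    show "coprime (m + 1) k" if "k \<in> {1..m}" for k
      using prime_cop[OF pr, of k] that by simp
    show "coprime (m + 1) (m + 1)" if "{a, b} \<in> TE" "a \<notin> T - {l}" "b \<notin> T - {l}" for a b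
    proof -
      have "a \<in> T" "b \<in> T" "a \<noteq> b" using tree_edge_ne[OF T that(1)] by auto
      moreover have "a = l" "b = l" using that(2,3) calculation(1,2) by auto
      ultimately show ?thesis by simp
    qed
  qed
qed

lemma stepB:
  assumes m1: "m \<ge> 1" and tc: "tree_complete (SP_vertices m) (SP_edges m)" and pr: "prime (m+1)"
  shows "tree_complete (SP_vertices (m+2)) (SP_edges (m+2))"
  unfolding tree_complete_def
proof (intro allI impI, elim conjE)
  fix T :: "nat set" and TE assume T: "is_tree T TE" and c: "card T = card (SP_vertices (m+2))"
  have cT: "card T = m + 2" using c by (simp add: SP_vertices_def)
  have c2: "card T \<ge> 2" using cT m1 by simp
  obtain ps where ps0: "tpath T TE ps" "length ps \<ge> 2" "\<forall>qs. tpath T TE qs \<longrightarrow> length qs \<le> length ps"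
    using longest_path[OF T c2] by blast
  have ps: "tpath T TE ps" "length ps \<ge> 2" "\<And>qs. tpath T TE qs \<Longrightarrow> length qs \<le> length ps"
    using ps0 by auto
  have L3: "length ps \<ge> 3" using len3[OF T _ ps] cT m1 by simp
  define l where "l = ps!0"
  define w where "w = ps!1"
  define z where "z = ps!2"
  have dps: "distinct ps" using ps(1) by (simp add: tpath_def)
  have pne: "ps \<noteq> []" using L3 by auto
  have dist: "l \<noteq> w" "l \<noteq> z" "w \<noteq> z"
    using nth_eq_iff_index_eq[OF dps, of 0 1] nth_eq_iff_index_eq[OF dps, of 0 2]
      nth_eq_iff_index_eq[OF dps, of 1 2] L3 pne unfolding l_def w_def z_def by auto
  have "graph_adj TE (ps!0) (ps!(0+1))" using ps(1,2) unfolding tpath_def by simp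
  then have e1: "{l,w} \<in> TE" by (simp add: graph_adj_def l_def w_def)
  have "graph_adj TE (ps!1) (ps!(1+1))" using ps(1) L3 unfolding tpath_def by simp
  then have e2: "{w,z} \<in> TE" by (simp add: graph_adj_def w_def z_def numeral_2_eq_2)
  have leaf: "y = w" if "{l,y} \<in> TE" for y using hd_leaf[OF T ps(1,2) ps(3)] that l_def w_def by simp
  have lT: "l \<in> T" "w \<in> T" using tree_edge_ne[OF T e1] by auto
  have T1: "is_tree (T - {l}) (contr TE l w)" by (rule contract_tree[OF T e1])
  have e2': "{w,z} \<in> contr TE l w" using e2 dist by (simp add: contr_keep)
  have T2: "is_tree (T - {l} - {w}) (contr (contr TE l w) w z)" by (rule contract_tree[OF T1 e2'])
  have fin: "finite T" using T by (simp add: is_tree_def simple_graph_def)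
  have cT': "card (T - {l} - {w}) = m" using cT lT fin dist by simp
  have emb: "subgraph_embeds (T - {l} - {w}) (contr (contr TE l w) w z) {1..m} (SP_edges m)"
    by (rule tc_use[OF tc T2 cT'])
  have TT: "T - (T - {l} - {w}) = {l, w}" using lT by auto
  define h where "h x = (if x = w then m+1 else m+2)" for x
  show "subgraph_embeds T TE (SP_vertices (m + 2)) (SP_edges (m + 2))"
  proof (rule extend[OF _ _ _ emb, where h = h])
    show "simple_graph T TE" using T by (simp add: is_tree_def)
    show "T - {l} - {w} \<subseteq> T" by auto
    show "m \<le> m + 2" by simp
    show "\<And>e. e \<in> TE \<Longrightarrow> e \<subseteq> T - {l} - {w} \<Longrightarrow> e \<in> contr (contr TE l w) w z"
    proof -
      fix e assume "e \<in> TE" "e \<subseteq> T - {l} - {w}"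
      then have "e \<in> contr TE l w" "w \<notin> e" using contr_keep[of e TE l w] by auto
      then show "e \<in> contr (contr TE l w) w z" by (rule contr_keep)
    qed
    show "inj_on h (T - (T - {l} - {w}))" unfolding TT using dist by (simp add: h_def)
    show "h ` (T - (T - {l} - {w})) \<subseteq> {m<..m + 2}" unfolding TT by (auto simp: h_def)
    show "coprime (h a) k" if "{a, b} \<in> TE" "a \<notin> T - {l} - {w}" "b \<in> T - {l} - {w}" "k \<in> {1..m}" for a b k
    proof -
      have "a \<in> T" using tree_edge_ne[OF T that(1)] by simp
      then have "a = l \<or> a = w" using that(2) by auto
      moreover have "a \<noteq> l" using leaf that(1,3) by auto
      ultimately show ?thesis using prime_cop[OF pr] that(4) by (auto simp: h_def)
    qed
    show "coprime (h a) (h b)" if "{a, b} \<in> TE" "a \<notin> T - {l} - {w}" "b \<notin> T - {l} - {w}" for a b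
    proof -
      have "a \<in> T" "b \<in> T" "a \<noteq> b" using tree_edge_ne[OF T that(1)] by auto
      then have "(a = l \<and> b = w) \<or> (a = w \<and> b = l)" using that by auto
      then show ?thesis using dist by (auto simp: h_def)
    qed
  qed
qed

lemma reduce3:
  fixes T :: "nat set"
  assumes T: "is_tree T TE" and tc: "tree_complete (SP_vertices m) (SP_edges m)" and cT: "card T = m + 3"
    and e1: "{x1,y1} \<in> TE" and e2: "{x2,y2} \<in> TE" and e3: "{x3,y3} \<in> TE"
    and d: "x1 \<noteq> x2" "x1 \<noteq> x3" "x2 \<noteq> x3" "x1 \<noteq> y2" "x1 \<noteq> y3" "x2 \<noteq> y3"
  shows "\<exists>E'. subgraph_embeds (T - {x1,x2,x3}) E' {1..m} (SP_edges m) \<and>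
              (\<forall>e\<in>TE. e \<subseteq> T - {x1,x2,x3} \<longrightarrow> e \<in> E')"
proof -
  define E1 where "E1 = contr TE x1 y1"
  define E2 where "E2 = contr E1 x2 y2"
  define E3 where "E3 = contr E2 x3 y3"
  have T1: "is_tree (T - {x1}) E1" unfolding E1_def by (rule contract_tree[OF T e1])
  have e2': "{x2,y2} \<in> E1" unfolding E1_def using e2 d by (simp add: contr_keep)
  have T2: "is_tree (T - {x1} - {x2}) E2" unfolding E2_def by (rule contract_tree[OF T1 e2'])
  have e3a: "{x3,y3} \<in> E1" unfolding E1_def using e3 d by (simp add: contr_keep)
  have e3': "{x3,y3} \<in> E2" unfolding E2_def using e3a d by (simp add: contr_keep)
  have T3: "is_tree (T - {x1} - {x2} - {x3}) E3" unfolding E3_def by (rule contract_tree[OF T2 e3'])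
  have eq: "T - {x1} - {x2} - {x3} = T - {x1,x2,x3}" by auto
  have xT: "x1 \<in> T" "x2 \<in> T" "x3 \<in> T" using tree_edge_ne[OF T e1] tree_edge_ne[OF T e2] tree_edge_ne[OF T e3] by auto
  have fin: "finite T" using T by (simp add: is_tree_def simple_graph_def)
  have "card (T - {x1,x2,x3}) = card T - card {x1,x2,x3}" using xT fin by (simp add: card_Diff_subset)
  also have "card {x1,x2,x3} = 3" using d by simp
  finally have c3: "card (T - {x1,x2,x3}) = m" using cT by simp
  have emb: "subgraph_embeds (T - {x1,x2,x3}) E3 {1..m} (SP_edges m)"
    using tc_use[OF tc T3[unfolded eq] c3] .
  have keep: "\<forall>e\<in>TE. e \<subseteq> T - {x1,x2,x3} \<longrightarrow> e \<in> E3"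
  proof (intro ballI impI)
    fix e assume e: "e \<in> TE" "e \<subseteq> T - {x1,x2,x3}"
    then have n: "x1 \<notin> e" "x2 \<notin> e" "x3 \<notin> e" by auto
    have "e \<in> E1" unfolding E1_def using contr_keep[OF e(1) n(1)] .
    then have "e \<in> E2" unfolding E2_def using contr_keep n(2) by metis
    then show "e \<in> E3" unfolding E3_def using contr_keep n(3) by metis
  qed
  show ?thesis using emb keep by blast
qed

lemma cop_facts:
  assumes pr: "prime (m+1::nat)" and m3: "m + 1 \<ge> 3"
  shows "coprime (m+1) (m+2)" "coprime (m+2) (m+1)" "coprime (m+2) (m+3)" "coprime (m+3) (m+2)"
        "coprime (m+1) (m+3)" "coprime (m+3) (m+1)"
proof -
  show a: "coprime (m+1) (m+2)" "coprime (m+2) (m+3)" by (simp_all add: numeral_3_eq_3 numeral_2_eq_2)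
  then show "coprime (m+2) (m+1)" "coprime (m+3) (m+2)" by (simp_all add: coprime_commute)
  have "\<not> (m+1) dvd (m+3)"
  proof
    assume h: "(m+1) dvd (m+3)"
    have "(m+1) dvd (m+3 - (m+1))" by (rule dvd_diff_nat[OF h dvd_refl])
    then have "(m+1) dvd 2" by simp
    then have "m + 1 \<le> 2" using dvd_imp_le[of "m+1" 2] by simp
    then show False using m3 by simp
  qed
  then show b: "coprime (m+1) (m+3)" using prime_imp_coprime[OF pr] by blast
  then show "coprime (m+3) (m+1)" by (simp add: coprime_commute)
qed

lemma stepC:
  assumes m1: "m \<ge> 1" and tc: "tree_complete (SP_vertices m) (SP_edges m)" and pr: "prime (m+1)"
    and m3: "m + 1 \<ge> 3"
  shows "tree_complete (SP_vertices (m+3)) (SP_edges (m+3))"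
  unfolding tree_complete_def
proof (intro allI impI, elim conjE)
  fix T :: "nat set" and TE assume T: "is_tree T TE" and c: "card T = card (SP_vertices (m+3))"
  have cT: "card T = m + 3" using c by (simp add: SP_vertices_def)
  have c2: "card T \<ge> 2" using cT by simp
  obtain ps where ps0: "tpath T TE ps" "length ps \<ge> 2" "\<forall>qs. tpath T TE qs \<longrightarrow> length qs \<le> length ps"
    using longest_path[OF T c2] by blast
  have ps: "tpath T TE ps" "length ps \<ge> 2" "\<And>qs. tpath T TE qs \<Longrightarrow> length qs \<le> length ps"
    using ps0 by auto
  have L3: "length ps \<ge> 3" using len3[OF T _ ps] cT by simp
  have dps: "distinct ps" using ps(1) by (simp add: tpath_def)
  have pne: "ps \<noteq> []" using L3 by auto
  have nc: "\<not> has_cycle TE" using T by (simp add: is_tree_def)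
  have sgT: "simple_graph T TE" using T by (simp add: is_tree_def)
  define v0 where "v0 = ps!0"
  define v1 where "v1 = ps!1"
  define v2 where "v2 = ps!2"
  have dist: "v0 \<noteq> v1" "v0 \<noteq> v2" "v1 \<noteq> v2"
    using nth_eq_iff_index_eq[OF dps, of 0 1] nth_eq_iff_index_eq[OF dps, of 0 2]
      nth_eq_iff_index_eq[OF dps, of 1 2] L3 pne unfolding v0_def v1_def v2_def by auto
  have "graph_adj TE (ps!0) (ps!(0+1))" using ps(1,2) unfolding tpath_def by simp
  then have e01: "{v0,v1} \<in> TE" by (simp add: graph_adj_def v0_def v1_def)
  have "graph_adj TE (ps!1) (ps!(1+1))" using ps(1) L3 unfolding tpath_def by simp
  then have e12: "{v1,v2} \<in> TE" by (simp add: graph_adj_def v1_def v2_def numeral_2_eq_2)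
  have leaf0: "y = v1" if "{v0,y} \<in> TE" for y using hd_leaf[OF T ps(1,2) ps(3)] that v0_def v1_def by simp
  have cf: "coprime (m+1) (m+2)" "coprime (m+2) (m+1)" "coprime (m+2) (m+3)" "coprime (m+3) (m+2)"
        "coprime (m+1) (m+3)" "coprime (m+3) (m+1)" using cop_facts[OF pr m3] by auto
  have pc: "coprime (m+1) k" if "k \<in> {1..m}" for k using prime_cop[OF pr, of k] that by simp
  show "subgraph_embeds T TE (SP_vertices (m + 3)) (SP_edges (m + 3))"
  proof (cases "\<exists>u. {v1,u} \<in> TE \<and> u \<noteq> v0 \<and> u \<noteq> v2")
    case True
    then obtain u where u: "{v1,u} \<in> TE" "u \<noteq> v0" "u \<noteq> v2" by blast
    have u1: "u \<noteq> v1" "u \<in> T" using tree_edge_ne[OF T u(1)] by auto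
    have unps: "u \<notin> set ps"
    proof
      assume "u \<in> set ps"
      then obtain j where j: "j < length ps" "ps!j = u" by (auto simp: in_set_conv_nth)
      have "j \<noteq> 0" using j u(2) unfolding v0_def by (metis)
      moreover have "j \<noteq> 1" using j u1(1) unfolding v1_def by metis
      moreover have "j \<noteq> 2" using j u(3) unfolding v2_def by metis
      ultimately have j3: "1 + 2 \<le> j" by simp
      have "graph_adj TE (ps!j) (ps!1)" using u(1) j by (simp add: graph_adj_def insert_commute v1_def)
      then have "has_cycle TE" using chord_cycle[OF ps(1) j3 j(1)] by simp
      then show False using nc by simp
    qed
    obtain a rs where ars: "ps = a # rs" using pne by (cases ps) auto
    have rs0: "rs!0 = v1" using ars by (simp add: v1_def)
    have qp: "tpath T TE (u # rs)"
      unfolding tpath_def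
    proof (intro conjI allI impI)
      show "distinct (u # rs)" using dps unps ars by simp
      show "set (u # rs) \<subseteq> T" using ps(1) u1 ars by (auto simp: tpath_def)
    next
      fix i assume i: "i + 1 < length (u # rs)"
      show "graph_adj TE ((u # rs) ! i) ((u # rs) ! (i + 1))"
      proof (cases i)
        case 0
        have "{u, rs!0} \<in> TE" using u(1) rs0 by (simp add: insert_commute)
        then show ?thesis using 0 by (simp add: graph_adj_def)
      next
        case (Suc k)
        have "Suc k + 1 < length ps" using i Suc ars by simp
        then have "graph_adj TE (ps!(Suc k)) (ps!(Suc k + 1))" using ps(1) unfolding tpath_def by blast
        then show ?thesis using Suc ars by simp
      qed
    qed
    have lq: "length (u # rs) = length ps" using ars by simp
    have leafu: "y = v1" if "{u,y} \<in> TE" for y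
    proof -
      have "y = (u # rs)!1" using hd_leaf[OF T qp, of y] lq ps(2,3) that by simp
      then show ?thesis using rs0 by simp
    qed
    obtain E' where E': "subgraph_embeds (T - {v0,u,v1}) E' {1..m} (SP_edges m)"
      "\<forall>e\<in>TE. e \<subseteq> T - {v0,u,v1} \<longrightarrow> e \<in> E'"
    proof -
      have eu: "{u,v1} \<in> TE" using u(1) by (simp add: insert_commute)
      have "v0 \<noteq> u" "v0 \<noteq> v1" "u \<noteq> v1" "v0 \<noteq> v1" "v0 \<noteq> v2" "u \<noteq> v2" using dist u u1 by auto
      from reduce3[OF T tc cT e01 eu e12 this] show thesis using that by blast
    qed
    have TT: "T - (T - {v0,u,v1}) = {v0,u,v1}" using u1 tree_edge_ne[OF T e01] by auto
    define h where "h x = (if x = v1 then m+1 else if x = v0 then m+2 else m+3)" for x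
    show ?thesis
    proof (rule extend[OF sgT _ _ E'(1), where h = h])
      show "T - {v0,u,v1} \<subseteq> T" by auto
      show "m \<le> m + 3" by simp
      show "e \<in> E'" if "e \<in> TE" "e \<subseteq> T - {v0,u,v1}" for e using E'(2) that by blast
      show "inj_on h (T - (T - {v0,u,v1}))" unfolding TT inj_on_def using dist u u1 by (simp add: h_def)
      show "h ` (T - (T - {v0,u,v1})) \<subseteq> {m<..m + 3}" unfolding TT using dist u u1 by (auto simp: h_def)
      show "coprime (h a) k" if "{a, b} \<in> TE" "a \<notin> T - {v0,u,v1}" "b \<in> T - {v0,u,v1}" "k \<in> {1..m}" for a b k
      proof -
        have "a \<in> T" using tree_edge_ne[OF T that(1)] by simp
        then have "a = v0 \<or> a = u \<or> a = v1" using that(2) by auto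
        moreover have "a \<noteq> v0" using leaf0[of b] that(1,3) by auto
        moreover have "a \<noteq> u" using leafu[of b] that(1,3) by auto
        ultimately have "a = v1" by simp
        then show ?thesis using pc that(4) by (simp add: h_def)
      qed
      show "coprime (h a) (h b)" if "{a, b} \<in> TE" "a \<notin> T - {v0,u,v1}" "b \<notin> T - {v0,u,v1}" for a b
      proof -
        have ab: "a \<in> T" "b \<in> T" "a \<noteq> b" using tree_edge_ne[OF T that(1)] by auto
        then have a3: "a = v0 \<or> a = u \<or> a = v1" and b3: "b = v0 \<or> b = u \<or> b = v1" using that(2,3) by auto
        show ?thesis
        proof (cases "a = v1")
          case True
          then have "b = v0 \<or> b = u" using b3 ab by auto
          then show ?thesis using True cf dist u u1 by (auto simp: h_def)
        next
          case False
          then have "a = v0 \<or> a = u" using a3 by auto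
          then have "b = v1" using leaf0 leafu that(1) by auto
          then show ?thesis using \<open>a = v0 \<or> a = u\<close> cf dist u u1 by (auto simp: h_def)
        qed
      qed
    qed
  next
    case False
    then have nb1: "y = v0 \<or> y = v2" if "{v1,y} \<in> TE" for y using that by blast
    have L4: "length ps \<ge> 4"
    proof (rule ccontr)
      assume "\<not> ?thesis"
      then have L: "length ps = 3" using L3 by simp
      have S: "{v0,v1,v2} \<subseteq> T" using tree_edge_ne[OF T e01] tree_edge_ne[OF T e12] by auto
      have "T \<subseteq> {v0,v1,v2}"
      proof (rule closure[of T TE v0])
        show "connected_graph T TE" using T by (simp add: is_tree_def)
        show "v0 \<in> {v0,v1,v2}" by simp
        show "{v0,v1,v2} \<subseteq> T" by (rule S)
      next
        fix a b assume ab: "{a,b} \<in> TE" "a \<in> {v0,v1,v2}"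
        then consider "a = v0" | "a = v1" | "a = v2" by auto
        then show "b \<in> {v0,v1,v2}"
        proof cases
          case 1 then show ?thesis using leaf0 ab by auto
        next
          case 2 then show ?thesis using nb1 ab by auto
        next
          case 3
          then have "a = ps!(length ps - 1)" using L by (simp add: v2_def)
          then have "b = ps!(length ps - 2)" using last_leaf[OF T ps(1,2) ps(3)] ab(1) by blast
          then show ?thesis using L by (simp add: v1_def)
        qed
      qed
      then have "card T \<le> card {v0,v1,v2}" by (simp add: card_mono)
      also have "\<dots> \<le> 3" by (simp add: card_insert_if)
      finally show False using cT m1 by simp
    qed
    define v3 where "v3 = ps!3"
    have dist3: "v0 \<noteq> v3" "v1 \<noteq> v3" "v2 \<noteq> v3"
      using nth_eq_iff_index_eq[OF dps, of 0 3] nth_eq_iff_index_eq[OF dps, of 1 3]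
        nth_eq_iff_index_eq[OF dps, of 2 3] L4 pne unfolding v0_def v1_def v2_def v3_def by auto
    have "2 + 1 < length ps" using L4 by simp
    then have "graph_adj TE (ps!2) (ps!(2+1))" using ps(1) unfolding tpath_def by blast
    then have e23: "{v2,v3} \<in> TE" by (simp add: graph_adj_def v2_def v3_def numeral_3_eq_3 numeral_2_eq_2)
    obtain E' where E': "subgraph_embeds (T - {v0,v1,v2}) E' {1..m} (SP_edges m)"
      "\<forall>e\<in>TE. e \<subseteq> T - {v0,v1,v2} \<longrightarrow> e \<in> E'"
      using reduce3[OF T tc cT e01 e12 e23] dist dist3 by blast
    have TT: "T - (T - {v0,v1,v2}) = {v0,v1,v2}" using tree_edge_ne[OF T e01] tree_edge_ne[OF T e12] by auto
    define h where "h x = (if x = v2 then m+1 else if x = v1 then m+2 else m+3)" for x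
    show ?thesis
    proof (rule extend[OF sgT _ _ E'(1), where h = h])
      show "T - {v0,v1,v2} \<subseteq> T" by auto
      show "m \<le> m + 3" by simp
      show "e \<in> E'" if "e \<in> TE" "e \<subseteq> T - {v0,v1,v2}" for e using E'(2) that by blast
      show "inj_on h (T - (T - {v0,v1,v2}))" unfolding TT inj_on_def using dist by (simp add: h_def)
      show "h ` (T - (T - {v0,v1,v2})) \<subseteq> {m<..m + 3}" unfolding TT using dist by (auto simp: h_def)
      show "coprime (h a) k" if "{a, b} \<in> TE" "a \<notin> T - {v0,v1,v2}" "b \<in> T - {v0,v1,v2}" "k \<in> {1..m}" for a b k
      proof -
        have "a \<in> T" using tree_edge_ne[OF T that(1)] by simp
        then have "a = v0 \<or> a = v1 \<or> a = v2" using that(2) by auto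
        moreover have "a \<noteq> v0" using leaf0[of b] that(1,3) by auto
        moreover have "a \<noteq> v1" using nb1[of b] that(1,3) by auto
        ultimately have "a = v2" by simp
        then show ?thesis using pc that(4) by (simp add: h_def)
      qed
      show "coprime (h a) (h b)" if "{a, b} \<in> TE" "a \<notin> T - {v0,v1,v2}" "b \<notin> T - {v0,v1,v2}" for a b
      proof -
        have ab: "a \<in> T" "b \<in> T" "a \<noteq> b" using tree_edge_ne[OF T that(1)] by auto
        then have a3: "a = v0 \<or> a = v1 \<or> a = v2" and b3: "b = v0 \<or> b = v1 \<or> b = v2" using that(2,3) by auto
        consider "a = v0" | "a = v1" | "a = v2" using a3 by blast
        then show ?thesis
        proof cases
          case 1
          then have "b = v1" using leaf0 that(1) by auto
          then show ?thesis using 1 cf dist by (simp add: h_def)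
        next
          case 2
          then have "b = v0 \<or> b = v2" using nb1 that(1) by auto
          then show ?thesis using 2 cf dist by (auto simp: h_def)
        next
          case 3
          then have "b = v0 \<or> b = v1" using b3 ab by auto
          then show ?thesis using 3 cf dist by (auto simp: h_def)
        qed
      qed
    qed
  qed
qed

theorem corollary9p6:
  fixes n :: nat
  assumes "n \<ge> 1"
    and "tree_complete (SP_vertices n) (SP_edges n)"
    and "prime (n + 1)"
  shows "tree_complete (SP_vertices (n + 1)) (SP_edges (n + 1)) \<and>
         tree_complete (SP_vertices (n + 2)) (SP_edges (n + 2)) \<and>
         (prime (n + 3) \<longrightarrow>
            (\<forall>k\<in>{1..5::nat}. tree_complete (SP_vertices (n + k)) (SP_edges (n + k))))"
proof -
  have A1: "tree_complete (SP_vertices (n + 1)) (SP_edges (n + 1))" by (rule stepA[OF assms])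
  have B2: "tree_complete (SP_vertices (n + 2)) (SP_edges (n + 2))" by (rule stepB[OF assms])
  have "prime (n + 3) \<longrightarrow>
            (\<forall>k\<in>{1..5::nat}. tree_complete (SP_vertices (n + k)) (SP_edges (n + k)))"
  proof
    assume p3: "prime (n + 3)"
    have m1: "n + 2 \<ge> 1" by simp
    have eq3: "n + 2 + 1 = n + 3" "n + 2 + 2 = n + 4" "n + 2 + 3 = n + 5" by simp_all
    have pr': "prime (n + 2 + 1)" unfolding eq3 by (rule p3)
    have ge3: "n + 2 + 1 \<ge> 3" using assms(1) by simp
    have C3: "tree_complete (SP_vertices (n + 3)) (SP_edges (n + 3))"
      using stepA[OF m1 B2 pr'] unfolding eq3 .
    have C4: "tree_complete (SP_vertices (n + 4)) (SP_edges (n + 4))"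
      using stepB[OF m1 B2 pr'] unfolding eq3 .
    have C5: "tree_complete (SP_vertices (n + 5)) (SP_edges (n + 5))"
      using stepC[OF m1 B2 pr' ge3] unfolding eq3 .
    show "\<forall>k\<in>{1..5::nat}. tree_complete (SP_vertices (n + k)) (SP_edges (n + k))"
    proof
      fix k :: nat assume "k \<in> {1..5}"
      then have "k = 1 \<or> k = 2 \<or> k = 3 \<or> k = 4 \<or> k = 5" by auto
      then show "tree_complete (SP_vertices (n + k)) (SP_edges (n + k))"
        using A1 B2 C3 C4 C5 by auto
    qed
  qed
  then show ?thesis using A1 B2 by blast
qed

end
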